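(* Let $K$ be a finite oriented simplicial complex, let $d \geq 0$, and let $n$ be the number of $d$-simplices of $K$. Let ${\bm{B}}_d$ and ${\bm{B}}_{d+1}$ be the boundary matrices of $K$ in degrees $d$ and $d+1$ (with ${\bm{B}}_0 = 0$ and ${\bm{B}}_{d+1}=0$ if $K$ has no $(d+1)$-simplices). Let $F, F', Z$ be positive integers and, for each head $z \in \{1,\dots,Z\}$, fix matrices ${\bm{W}}^{z}_1, {\bm{W}}^{z}_2 \in \mathbb{R}^{F' \times F}$, functions $a^{z}_1, a^{z}_2 : \mathbb{R}^{F'} \times \mathbb{R}^{F'} \to \mathbb{R}$ and a function $\phi^{z} : \mathbb{R}^{F'} \times \mathbb{R}^{F'} \to \mathbb{R}^{G}$. Assume that for every $z$ and $i\in\{1,2\}$, $a^z_i$ is even in each argument separately, i.e. $a^z_i(-u,v) = a^z_i(u,v) = a^z_i(u,-v)$ for all $u,v$, and that $\phi^z$ is odd, i.e. $\phi^z(-x,-y) = -\phi^z(x,y)$ for all $x,y$. Let $f$ be the SAT layer defined below, mapping a feature matrix ${\bm{H}} \in \mathbb{R}^{n\times F}$ (rows indexed by the $d$-simplices) together with $({\bm{B}}_d, {\bm{B}}_{d+1})$ to $f({\bm{H}}, {\bm{B}}_d, {\bm{B}}_{d+1}) \in \mathbb{R}^{n \times ZG}$. Then $f$ is orientation equivariant: for every diagonal matrix ${\bm{T}} \in \mathbb{R}^{n\times n}$ with diagonal entries in $\{\pm 1\}$, $$f({\bm{T}}{\bm{H}}, {\bm{B}}_d{\bm{T}}, {\bm{T}}{\bm{B}}_{d+1})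 = {\bm{T}}\, f({\bm{H}}, {\bm{B}}_d, {\bm{B}}_{d+1}).$$
   Context: Boundary matrices: for an oriented simplex $[v_0,\dots,v_k]$, $\partial_k [v_0,\dots,v_k] = \sum_{i=0}^k (-1)^i [v_0,\dots,\hat v_i,\dots,v_k]$, where two orderings of the vertices represent the same oriented simplex if they differ by an even permutation and the negative of each other if they differ by an odd permutation; ${\bm{B}}_k$ is the matrix of $\partial_k$ with rows indexed by the (chosen oriented) $(k-1)$-simplices and columns by the $k$-simplices. Multiplying ${\bm{B}}_d$ on the right by ${\bm{T}}$ and ${\bm{B}}_{d+1}$ on the left by ${\bm{T}}$ corresponds to reversing the orientation of those $d$-simplices whose diagonal entry in ${\bm{T}}$ is $-1$. Neighbourhoods (purely combinatorial, independent of orientations): for a $d$-simplex $\sigma$, ${\mathcal{N}}^{\uparrow}_\sigma$ is the set consisting of $\sigma$ together with all $d$-simplices $\tau \ne \sigma$ such that $\sigma$ and $\tau$ are both faces of a common $(d+1)$-simplex (upper adjacent); ${\mathcal{N}}^{\downarrow}_\sigma$ is the set consisting of $\sigma$ together with all $d$-simplices $\tau\neq\sigma$ sharing a common $(d-1)$-dimensional face with $\sigma$ (lower adjacent). Relative orientations: set $o^{\uparrow}_{\sigma,\sigma} = o^{\downarrow}_{\sigma,\sigma} = 1$; for $\tau \in {\mathcal{N}}^{\uparrow}_\sigma\setminus\{\sigma\}$ set $o^{\uparrow}_{\sigma,\tau} = ({\bm{B}}_{d+1}{\bm{B}}_{d+1}^\top)_{\sigma\tau} \in \{\pm1\}$,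 and for $\tau \in {\mathcal{N}}^{\downarrow}_\sigma\setminus\{\sigma\}$ set $o^{\downarrow}_{\sigma,\tau} = ({\bm{B}}_{d}^\top{\bm{B}}_{d})_{\sigma\tau} \in \{\pm1\}$ (two distinct $d$-simplices share at most one common coface and at most one common face, so these entries are $\pm1$). SAT layer: writing ${\bm{h}}_\sigma \in \mathbb{R}^F$ for the row of ${\bm{H}}$ indexed by $\sigma$, the attention coefficients of head $z$ are $$\alpha^{\uparrow,z}_{\sigma,\tau} = o^{\uparrow}_{\sigma,\tau}\cdot \frac{\exp\big(a^z_1({\bm{W}}^z_1{\bm{h}}_\sigma, {\bm{W}}^z_1{\bm{h}}_\tau)\big)}{\sum_{\rho\in{\mathcal{N}}^{\uparrow}_\sigma}\exp\big(a^z_1({\bm{W}}^z_1{\bm{h}}_\sigma, {\bm{W}}^z_1{\bm{h}}_\rho)\big)}, \quad \tau\in{\mathcal{N}}^{\uparrow}_\sigma,$$ $$\alpha^{\downarrow,z}_{\sigma,\tau} = o^{\downarrow}_{\sigma,\tau}\cdot \frac{\exp\big(a^z_2({\bm{W}}^z_2{\bm{h}}_\sigma, {\bm{W}}^z_2{\bm{h}}_\tau)\big)}{\sum_{\rho\in{\mathcal{N}}^{\downarrow}_\sigma}\exp\big(a^z_2({\bm{W}}^z_2{\bm{h}}_\sigma, {\bm{W}}^z_2{\bm{h}}_\rho)\big)}, \quad \tau\in{\mathcal{N}}^{\downarrow}_\sigma,$$ and the output row indexed by $\sigma$ is the concatenation over $z=1,\dots,Z$ of $$\phi^z\Big(\sum_{\tau\in{\mathcal{N}}^{\uparrow}_\sigma}\alpha^{\uparrow,z}_{\sigma,\tau}{\bm{W}}^z_1{\bm{h}}_\tau,\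 \sum_{\tau\in{\mathcal{N}}^{\downarrow}_\sigma}\alpha^{\downarrow,z}_{\sigma,\tau}{\bm{W}}^z_2{\bm{h}}_\tau\Big).$$ (When the orientations and boundary matrices change as in the claim, the coefficients $o$ are recomputed from the new boundary matrices.) *)

theory Defs
  imports "HOL-Analysis.Analysis" "HOL-Combinatorics.Permutations"
begin

definition abs_simplicial_complex :: "'v set set \<Rightarrow> bool" where
  "abs_simplicial_complex K \<longleftrightarrow> finite K \<and>
     (\<forall>\<sigma>\<in>K. finite \<sigma> \<and> \<sigma> \<noteq> {} \<and> (\<forall>\<tau>. \<tau> \<subseteq> \<sigma> \<and> \<tau> \<noteq> {} \<longrightarrow> \<tau> \<in> K))"

definition simplices :: "'v set set \<Rightarrow> nat \<Rightarrow> 'v set set" where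
  "simplices K k = {\<sigma>\<in>K. card \<sigma> = Suc k}"

text \<open>An orientation chooses for every simplex an ordering of its vertices
(the oriented simplex is the class of this ordering under even permutations).\<close>
definition orientation :: "'v set set \<Rightarrow> ('v set \<Rightarrow> 'v list) \<Rightarrow> bool" where
  "orientation K ori \<longleftrightarrow> (\<forall>\<sigma>\<in>K. distinct (ori \<sigma>) \<and> set (ori \<sigma>) = \<sigma>)"

text \<open>Sign of the permutation carrying the ordering ys to the ordering xs
(both distinct lists of the same elements): [xs] = list_sign xs ys * [ys].\<close>
definition list_sign :: "'v list \<Rightarrow> 'v list \<Rightarrow> real" where
  "list_sign xs ys = of_int (sign (THE p. p permutes {..<length xs} \<and>
       (\<forall>i<length xs. xs ! i = ys ! p i)))"

definition remove_nth :: "nat \<Rightarrow> 'a list \<Rightarrow> 'a list" where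
  "remove_nth i xs = take i xs @ drop (Suc i) xs"

text \<open>Boundary matrix B_k of the oriented complex, as a function
(row (k-1)-simplex tau, column k-simplex sigma). Rows are the simplices with k vertices;
for k = 0 there are none (B_0 = 0).\<close>
definition boundary_matrix :: "'v set set \<Rightarrow> ('v set \<Rightarrow> 'v list) \<Rightarrow> nat \<Rightarrow> 'v set \<Rightarrow> 'v set \<Rightarrow> real" where
  "boundary_matrix K ori k \<tau> \<sigma> =
     (if \<sigma> \<in> simplices K k \<and> \<tau> \<in> K \<and> card \<tau> = k \<and> \<tau> \<subseteq> \<sigma> then
        (let xs = ori \<sigma>; i = (THE i. i < length xs \<and> xs ! i \<notin> \<tau>) in
           (-1) ^ i * list_sign (remove_nth i xs) (ori \<tau>))
      else 0)"

definition up_nbhd :: "'v set set \<Rightarrow> nat \<Rightarrow> 'v set \<Rightarrow> 'v set set" where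
  "up_nbhd K d \<sigma> = insert \<sigma> {\<tau>\<in>simplices K d. \<tau> \<noteq> \<sigma> \<and>
       (\<exists>\<rho>\<in>simplices K (Suc d). \<sigma> \<subseteq> \<rho> \<and> \<tau> \<subseteq> \<rho>)}"

definition down_nbhd :: "'v set set \<Rightarrow> nat \<Rightarrow> 'v set \<Rightarrow> 'v set set" where
  "down_nbhd K d \<sigma> = insert \<sigma> {\<tau>\<in>simplices K d. \<tau> \<noteq> \<sigma> \<and>
       (\<exists>\<rho>\<in>K. card \<rho> = d \<and> \<rho> \<subseteq> \<sigma> \<and> \<rho> \<subseteq> \<tau>)}"

definition o_up :: "'v set set \<Rightarrow> nat \<Rightarrow> ('v set \<Rightarrow> 'v set \<Rightarrow> real) \<Rightarrow> 'v set \<Rightarrow> 'v set \<Rightarrow> real" where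
  "o_up K d B1 \<sigma> \<tau> = (if \<tau> = \<sigma> then 1 else (\<Sum>\<rho>\<in>simplices K (Suc d). B1 \<sigma> \<rho> * B1 \<tau> \<rho>))"

definition o_down :: "'v set set \<Rightarrow> nat \<Rightarrow> ('v set \<Rightarrow> 'v set \<Rightarrow> real) \<Rightarrow> 'v set \<Rightarrow> 'v set \<Rightarrow> real" where
  "o_down K d B \<sigma> \<tau> = (if \<tau> = \<sigma> then 1 else (\<Sum>\<rho>\<in>{\<rho>\<in>K. card \<rho> = d}. B \<rho> \<sigma> * B \<rho> \<tau>))"

definition attn :: "('v set \<Rightarrow> 'v set \<Rightarrow> real) \<Rightarrow> 'v set set \<Rightarrow> real^'f^'fp \<Rightarrow>
    (real^'fp \<Rightarrow> real^'fp \<Rightarrow> real) \<Rightarrow> ('v set \<Rightarrow> real^'f) \<Rightarrow> 'v set \<Rightarrow> 'v set \<Rightarrow> real" where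
  "attn ori_rel N W a H \<sigma> \<tau> = ori_rel \<sigma> \<tau> * (exp (a (W *v H \<sigma>) (W *v H \<tau>)) /
       (\<Sum>\<rho>\<in>N. exp (a (W *v H \<sigma>) (W *v H \<rho>))))"

text \<open>The SAT layer: the row indexed by sigma is the concatenation over heads z
(represented as a vector indexed by 'z of vectors in R^G).\<close>
definition sat_layer :: "'v set set \<Rightarrow> nat \<Rightarrow> ('z \<Rightarrow> real^'f^'fp) \<Rightarrow> ('z \<Rightarrow> real^'f^'fp) \<Rightarrow>
    ('z \<Rightarrow> real^'fp \<Rightarrow> real^'fp \<Rightarrow> real) \<Rightarrow> ('z \<Rightarrow> real^'fp \<Rightarrow> real^'fp \<Rightarrow> real) \<Rightarrow>
    ('z \<Rightarrow> real^'fp \<Rightarrow> real^'fp \<Rightarrow> real^'g) \<Rightarrow>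
    ('v set \<Rightarrow> real^'f) \<Rightarrow> ('v set \<Rightarrow> 'v set \<Rightarrow> real) \<Rightarrow> ('v set \<Rightarrow> 'v set \<Rightarrow> real) \<Rightarrow>
    'v set \<Rightarrow> real^'g^'z" where
  "sat_layer K d W1 W2 a1 a2 phi H Bd Bd1 \<sigma> =
     (\<chi> z. phi z
        (\<Sum>\<tau>\<in>up_nbhd K d \<sigma>. attn (o_up K d Bd1) (up_nbhd K d \<sigma>) (W1 z) (a1 z) H \<sigma> \<tau> *\<^sub>R (W1 z *v H \<tau>))
        (\<Sum>\<tau>\<in>down_nbhd K d \<sigma>. attn (o_down K d Bd) (down_nbhd K d \<sigma>) (W2 z) (a2 z) H \<sigma> \<tau> *\<^sub>R (W2 z *v H \<tau>)))"

end

theory Submission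
  imports Defs
begin

lemma mv_scale: "(W :: real^'n::finite^'m::finite) *v (c *\<^sub>R x) = c *\<^sub>R (W *v x)"
  by (simp add: vec_eq_iff matrix_vector_mult_def sum_distrib_left algebra_simps)

lemma even_scale:
  assumes ev: "\<And>u v. a (- u) v = a u v \<and> a u (- v) = a u v"
    and "c = 1 \<or> c = (-1::real)" and "e = 1 \<or> e = (-1::real)"
  shows "a (c *\<^sub>R (u::'b::real_vector)) (e *\<^sub>R (v::'c::real_vector)) = a u v"
proof -
  have 1: "a (- x) y = a x y" "a x (- y) = a x y" for x y using ev by auto
  show ?thesis using assms(2,3)
    by (elim disjE) (simp_all only: scaleR_one scaleR_minus1_left 1)
qed

lemma attn_eq:
  fixes W :: "real^'f::finite^'fp::finite"
  assumes ev: "\<And>u v. a (- u) v = a u v \<and> a u (- v) = a u v"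
    and t: "\<forall>\<tau>\<in>N. t \<tau> = 1 \<or> t \<tau> = -1" and s: "\<sigma> \<in> N" and tt: "\<tau> \<in> N"
    and o': "relB \<sigma> \<tau> = t \<sigma> * t \<tau> * relA \<sigma> \<tau>"
  shows "attn relB N W a (\<lambda>\<tau>. t \<tau> *\<^sub>R H \<tau>) \<sigma> \<tau> *\<^sub>R (W *v (t \<tau> *\<^sub>R H \<tau>))
       = t \<sigma> *\<^sub>R (attn relA N W a H \<sigma> \<tau> *\<^sub>R (W *v H \<tau>))"
proof -
  have A: "a (W *v (t \<sigma> *\<^sub>R H \<sigma>)) (W *v (t \<rho> *\<^sub>R H \<rho>)) = a (W *v H \<sigma>) (W *v H \<rho>)"
    if "\<rho> \<in> N" for \<rho>
    unfolding mv_scale using even_scale[where a=a, OF ev] t s that by blast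
  have S: "(\<Sum>\<rho>\<in>N. exp (a (W *v (t \<sigma> *\<^sub>R H \<sigma>)) (W *v (t \<rho> *\<^sub>R H \<rho>))))
      = (\<Sum>\<rho>\<in>N. exp (a (W *v H \<sigma>) (W *v H \<rho>)))"
    by (rule sum.cong) (auto simp: A)
  have tt2: "t \<tau> * t \<tau> = 1" using t tt by auto
  have X: "t \<sigma> * t \<tau> * x * t \<tau> = t \<sigma> * x" for x :: real
    using tt2 by (metis mult.assoc mult.commute mult.right_neutral)
  show ?thesis
    unfolding attn_def S A[OF tt] o' unfolding mv_scale scaleR_scaleR
    apply (rule arg_cong[where f="\<lambda>c. c *\<^sub>R _"])
    using tt2 by (simp add: mult.assoc mult.left_commute)
qed

theorem proposition1:
  fixes K :: "'v set set" and ori :: "'v set \<Rightarrow> 'v list" and d :: nat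
    and W1 W2 :: "'z::finite \<Rightarrow> real^'f::finite^'fp::finite"
    and a1 a2 :: "'z \<Rightarrow> real^'fp \<Rightarrow> real^'fp \<Rightarrow> real"
    and phi :: "'z \<Rightarrow> real^'fp \<Rightarrow> real^'fp \<Rightarrow> real^'g::finite"
    and H :: "'v set \<Rightarrow> real^'f" and t :: "'v set \<Rightarrow> real"
    and Bd Bd1 :: "'v set \<Rightarrow> 'v set \<Rightarrow> real"
  assumes "abs_simplicial_complex K" and "orientation K ori"
    and "Bd = boundary_matrix K ori d" and "Bd1 = boundary_matrix K ori (Suc d)"
    and "\<And>z u v. a1 z (- u) v = a1 z u v \<and> a1 z u (- v) = a1 z u v"
    and "\<And>z u v. a2 z (- u) v = a2 z u v \<and> a2 z u (- v) = a2 z u v"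
    and "\<And>z x y. phi z (- x) (- y) = - phi z x y"
    and "\<And>\<sigma>. \<sigma> \<in> simplices K d \<Longrightarrow> t \<sigma> = 1 \<or> t \<sigma> = -1"
  shows "\<forall>\<sigma>\<in>simplices K d.
     sat_layer K d W1 W2 a1 a2 phi (\<lambda>\<tau>. t \<tau> *\<^sub>R H \<tau>) (\<lambda>\<rho> \<tau>. Bd \<rho> \<tau> * t \<tau>) (\<lambda>\<tau> \<rho>. t \<tau> * Bd1 \<tau> \<rho>) \<sigma>
     = t \<sigma> *\<^sub>R sat_layer K d W1 W2 a1 a2 phi H Bd Bd1 \<sigma>"
proof
  fix \<sigma> assume s: "\<sigma> \<in> simplices K d"
  have tU: "\<forall>\<tau>\<in>up_nbhd K d \<sigma>. t \<tau> = 1 \<or> t \<tau> = -1"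
    using s assms(8) by (auto simp: up_nbhd_def)
  have tD: "\<forall>\<tau>\<in>down_nbhd K d \<sigma>. t \<tau> = 1 \<or> t \<tau> = -1"
    using s assms(8) by (auto simp: down_nbhd_def)
  have ts: "t \<sigma> * t \<sigma> = 1" using assms(8)[OF s] by auto
  have oU: "o_up K d (\<lambda>\<tau> \<rho>. t \<tau> * Bd1 \<tau> \<rho>) \<sigma> \<tau> = t \<sigma> * t \<tau> * o_up K d Bd1 \<sigma> \<tau>" for \<tau>
    using ts by (auto simp: o_up_def sum_distrib_left algebra_simps intro!: sum.cong)
  have oD: "o_down K d (\<lambda>\<rho> \<tau>. Bd \<rho> \<tau> * t \<tau>) \<sigma> \<tau> = t \<sigma> * t \<tau> * o_down K d Bd \<sigma> \<tau>" for \<tau>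
    using ts by (auto simp: o_down_def sum_distrib_left algebra_simps intro!: sum.cong)
  have sU: "\<sigma> \<in> up_nbhd K d \<sigma>" and sD: "\<sigma> \<in> down_nbhd K d \<sigma>"
    by (auto simp: up_nbhd_def down_nbhd_def)
  have phis: "phi z (c *\<^sub>R x) (c *\<^sub>R y) = c *\<^sub>R phi z x y" if "c = 1 \<or> c = -1" for z c x y
    using that assms(7)[of z x y] by auto
  show "sat_layer K d W1 W2 a1 a2 phi (\<lambda>\<tau>. t \<tau> *\<^sub>R H \<tau>) (\<lambda>\<rho> \<tau>. Bd \<rho> \<tau> * t \<tau>) (\<lambda>\<tau> \<rho>. t \<tau> * Bd1 \<tau> \<rho>) \<sigma>
     = t \<sigma> *\<^sub>R sat_layer K d W1 W2 a1 a2 phi H Bd Bd1 \<sigma>"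
  proof -
    have SU: "(\<Sum>\<tau>\<in>up_nbhd K d \<sigma>. attn (o_up K d (\<lambda>\<tau> \<rho>. t \<tau> * Bd1 \<tau> \<rho>)) (up_nbhd K d \<sigma>) (W1 z) (a1 z) (\<lambda>\<tau>. t \<tau> *\<^sub>R H \<tau>) \<sigma> \<tau> *\<^sub>R (W1 z *v (t \<tau> *\<^sub>R H \<tau>)))
       = t \<sigma> *\<^sub>R (\<Sum>\<tau>\<in>up_nbhd K d \<sigma>. attn (o_up K d Bd1) (up_nbhd K d \<sigma>) (W1 z) (a1 z) H \<sigma> \<tau> *\<^sub>R (W1 z *v H \<tau>))" for z
      unfolding scaleR_sum_right
      apply (rule sum.cong[OF refl])
      apply (rule attn_eq[where a="a1 z" and t=t and N="up_nbhd K d \<sigma>" and relA="o_up K d Bd1" and relB="o_up K d (\<lambda>\<tau> \<rho>. t \<tau> * Bd1 \<tau> \<rho>)"])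
      using assms(5) tU sU oU by auto
    have SD: "(\<Sum>\<tau>\<in>down_nbhd K d \<sigma>. attn (o_down K d (\<lambda>\<rho> \<tau>. Bd \<rho> \<tau> * t \<tau>)) (down_nbhd K d \<sigma>) (W2 z) (a2 z) (\<lambda>\<tau>. t \<tau> *\<^sub>R H \<tau>) \<sigma> \<tau> *\<^sub>R (W2 z *v (t \<tau> *\<^sub>R H \<tau>)))
       = t \<sigma> *\<^sub>R (\<Sum>\<tau>\<in>down_nbhd K d \<sigma>. attn (o_down K d Bd) (down_nbhd K d \<sigma>) (W2 z) (a2 z) H \<sigma> \<tau> *\<^sub>R (W2 z *v H \<tau>))" for z
      unfolding scaleR_sum_right
      apply (rule sum.cong[OF refl])
      apply (rule attn_eq[where a="a2 z" and t=t and N="down_nbhd K d \<sigma>" and relA="o_down K d Bd" and relB="o_down K d (\<lambda>\<rho> \<tau>. Bd \<rho> \<tau> * t \<tau>)"])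
      using assms(6) tD sD oD by auto
    show ?thesis
      unfolding sat_layer_def SU SD
      using phis assms(8)[OF s] by (simp add: vec_eq_iff)
  qed
qed

end
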